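(* Let $\delta>0$, let $X$ be a geodesic $\delta$--hyperbolic space, and let the group $G$ act $(\kappa_0,N_0)$--acylindrically on $X$ with $\kappa_0\geqslant\delta$; put $\rho_0:=\delta/N_0$ and $c:=\frac{1}{10^6}\cdot\frac{\rho_0}{\kappa_0}$. Let $U\subset G$ be finite, let $x_0\in X$ be a point with $\frac1{|U|}\sum_{u\in U}|ux_0-x_0|\leqslant E(U)+\delta$, and let $U_1:=\{u\in U\mid |ux_0-x_0|\leqslant\kappa_0\}$. Then for all $v\in G$ with $|vx_0-x_0|\geqslant10^4\kappa_0$, $$|U_1vU_1|\geqslant c^2|U_1|^2.$$
   Context: Distance $|x-y|$; Gromov product $(p,q)_x=\frac12(|p-x|+|q-x|-|p-q|)$; $X$ is $\delta$--hyperbolic if $(p,r)_x\geqslant\min\{(p,q)_x,(q,r)_x\}-\delta$ for all $p,q,r,x$. The action is $(\kappa_0,N_0)$--acylindrical ($N_0\geqslant1$) if for all $x,y$ with $|x-y|\geqslant\kappa_0$ at most $N_0$ elements $g\in G$ satisfy $|gx-x|\leqslant100\delta$ and $|gy-y|\leqslant100\delta$. $E(U):=\inf_{x\in X}\frac1{|U|}\sum_{u\in U}|ux-x|$. $U_1vU_1:=\{uvw\mid u,w\in U_1\}$. *)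

theory Defs
  imports "HOL-Analysis.Analysis" "HOL-Algebra.Group"
begin

definition gromov_product :: "'x::metric_space \<Rightarrow> 'x \<Rightarrow> 'x \<Rightarrow> real" where
  "gromov_product p q x = (dist p x + dist q x - dist p q) / 2"

definition delta_hyperbolic :: "real \<Rightarrow> 'x::metric_space itself \<Rightarrow> bool" where
  "delta_hyperbolic \<delta> _ \<longleftrightarrow> (\<forall>p q r x::'x.
     gromov_product p r x \<ge> min (gromov_product p q x) (gromov_product q r x) - \<delta>)"

definition geodesic_space :: "'x::metric_space itself \<Rightarrow> bool" where
  "geodesic_space _ \<longleftrightarrow> (\<forall>x y::'x. \<exists>\<gamma>::real \<Rightarrow> 'x.
     \<gamma> 0 = x \<and> \<gamma> (dist x y) = y \<and>
     (\<forall>s\<in>{0..dist x y}. \<forall>t\<in>{0..dist x y}. dist (\<gamma> s) (\<gamma> t) = \<bar>s - t\<bar>))"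

definition isometric_action :: "('g, 'b) monoid_scheme \<Rightarrow> ('g \<Rightarrow> 'x::metric_space \<Rightarrow> 'x) \<Rightarrow> bool" where
  "isometric_action G act \<longleftrightarrow>
     (\<forall>x. act \<one>\<^bsub>G\<^esub> x = x) \<and>
     (\<forall>g\<in>carrier G. \<forall>h\<in>carrier G. \<forall>x. act (g \<otimes>\<^bsub>G\<^esub> h) x = act g (act h x)) \<and>
     (\<forall>g\<in>carrier G. \<forall>x y. dist (act g x) (act g y) = dist x y)"

definition acylindrical ::
  "('g, 'b) monoid_scheme \<Rightarrow> ('g \<Rightarrow> 'x::metric_space \<Rightarrow> 'x) \<Rightarrow> real \<Rightarrow> real \<Rightarrow> nat \<Rightarrow> bool" where
  "acylindrical G act \<delta> \<kappa>0 N0 \<longleftrightarrow> N0 \<ge> 1 \<and>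
     (\<forall>x y. dist x y \<ge> \<kappa>0 \<longrightarrow>
        (let S = {g \<in> carrier G. dist (act g x) x \<le> 100 * \<delta> \<and> dist (act g y) y \<le> 100 * \<delta>}
         in finite S \<and> card S \<le> N0))"

definition mean_disp :: "('g \<Rightarrow> 'x::metric_space \<Rightarrow> 'x) \<Rightarrow> 'g set \<Rightarrow> 'x \<Rightarrow> real" where
  "mean_disp act U x = (\<Sum>u\<in>U. dist (act u x) x) / real (card U)"

definition energy :: "('g \<Rightarrow> 'x::metric_space \<Rightarrow> 'x) \<Rightarrow> 'g set \<Rightarrow> real" where
  "energy act U = (INF x. mean_disp act U x)"

definition double_coset_prod :: "('g, 'b) monoid_scheme \<Rightarrow> 'g set \<Rightarrow> 'g \<Rightarrow> 'g set" where
  "double_coset_prod G U v = {u \<otimes>\<^bsub>G\<^esub> v \<otimes>\<^bsub>G\<^esub> w | u w. u \<in> U \<and> w \<in> U}"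

end

theory Submission
  imports Defs
begin

lemma near_geod:
  fixes x y z :: "'x::metric_space" and \<gamma> :: "real \<Rightarrow> 'x"
  assumes hyp: "delta_hyperbolic \<delta> TYPE('x)"
    and g0: "\<gamma> 0 = x" and gL: "\<gamma> (dist x y) = y"
    and gi: "\<forall>s\<in>{0..dist x y}. \<forall>t\<in>{0..dist x y}. dist (\<gamma> s) (\<gamma> t) = \<bar>s - t\<bar>"
    and sg: "\<sigma> = (dist z x - dist z y + dist x y) / 2" and s0: "0 \<le> \<sigma>" and sL: "\<sigma> \<le> dist x y"
  shows "dist z (\<gamma> \<sigma>) \<le> (dist z x + dist z y - dist x y) / 2 + 2 * \<delta>"
proof -
  have h: "gromov_product z (\<gamma> \<sigma>) x \<ge> min (gromov_product z y x) (gromov_product y (\<gamma> \<sigma>) x) - \<delta>"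
    using hyp unfolding delta_hyperbolic_def by blast
  have "dist (\<gamma> \<sigma>) (\<gamma> 0) = \<bar>\<sigma> - 0\<bar>" using gi s0 sL by auto
  then have d1: "dist (\<gamma> \<sigma>) x = \<sigma>" using g0 s0 by simp
  have "dist (\<gamma> (dist x y)) (\<gamma> \<sigma>) = \<bar>dist x y - \<sigma>\<bar>" using gi s0 sL by auto
  then have d2: "dist y (\<gamma> \<sigma>) = dist x y - \<sigma>" using gL sL by simp
  have d3: "dist y x = dist x y" by (simp add: dist_commute)
  have e1: "gromov_product z y x = \<sigma>" unfolding gromov_product_def using sg d3 by simp
  have e2: "gromov_product y (\<gamma> \<sigma>) x = \<sigma>" unfolding gromov_product_def using d1 d2 d3 by simp
  have "gromov_product z (\<gamma> \<sigma>) x \<ge> \<sigma> - \<delta>" using h e1 e2 by simp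
  then have "(dist z x + \<sigma> - dist z (\<gamma> \<sigma>)) / 2 \<ge> \<sigma> - \<delta>" unfolding gromov_product_def using d1 by simp
  moreover have "2 * \<sigma> = dist z x - dist z y + dist x y" using sg by simp
  ultimately show ?thesis by (simp add: field_simps)
qed

lemma near_line:
  fixes x y x' y' w :: "'x::metric_space"
  assumes hyp: "delta_hyperbolic \<delta> TYPE('x)"
    and e1: "dist x' y' = dist x y" and e2: "dist x' w = s" and e3: "dist w y' = dist x y - s"
    and k1: "dist x x' \<le> K" and k2: "dist y y' \<le> K" and c1: "s - K > \<delta>" and c2: "dist x y - s - K > 2 * \<delta>"
  shows "(dist w x + dist w y - dist x y) / 2 \<le> 2 * \<delta>"
    "s - K \<le> (dist w x - dist w y + dist x y) / 2"
    "(dist w x - dist w y + dist x y) / 2 \<le> s + K"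
proof -
  have h1: "gromov_product x' y' w \<ge> min (gromov_product x' x w) (gromov_product x y' w) - \<delta>"
    using hyp unfolding delta_hyperbolic_def by blast
  have h2: "gromov_product x y' w \<ge> min (gromov_product x y w) (gromov_product y y' w) - \<delta>"
    using hyp unfolding delta_hyperbolic_def by blast
  have t1: "dist x' w \<le> dist x x' + dist w x" "dist w x \<le> dist x x' + dist x' w"
    by (metis dist_commute dist_triangle)+
  have t2: "dist w y' \<le> dist y y' + dist w y" "dist w y \<le> dist y y' + dist w y'"
    by (metis dist_commute dist_triangle)+
  have cm: "dist x w = dist w x" "dist y w = dist w y" "dist y' w = dist w y'" "dist x' x = dist x x'"
    by (simp_all add: dist_commute)
  have g1: "gromov_product x' y' w = 0" unfolding gromov_product_def using e1 e2 e3 cm by simp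
  have g2: "gromov_product x' x w \<ge> s - K" unfolding gromov_product_def using e2 cm t1 k1 by simp
  have g3: "gromov_product y y' w \<ge> dist x y - s - K" unfolding gromov_product_def using e3 cm t2 k2 by simp
  have "gromov_product x y w \<le> 2 * \<delta>"
    using h1 h2 g1 g2 g3 c1 c2 by (auto simp: min_def split: if_splits)
  then show "(dist w x + dist w y - dist x y) / 2 \<le> 2 * \<delta>" unfolding gromov_product_def using cm by simp
  show "s - K \<le> (dist w x - dist w y + dist x y) / 2" using t1 t2 e2 e3 k1 k2 by simp
  show "(dist w x - dist w y + dist x y) / 2 \<le> s + K" using t1 t2 e2 e3 k1 k2 by simp
qed
lemma act_inv_dist:
  fixes G :: "('g, 'b) monoid_scheme" and act :: "'g \<Rightarrow> 'x::metric_space \<Rightarrow> 'x"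
  assumes grp: "group G" and iso: "isometric_action G act" and a: "a \<in> carrier G" and b: "b \<in> carrier G"
  shows "dist (act (inv\<^bsub>G\<^esub> a \<otimes>\<^bsub>G\<^esub> b) p) p = dist (act b p) (act a p)"
proof -
  have ia: "inv\<^bsub>G\<^esub> a \<in> carrier G" using grp a by (simp add: group.inv_closed)
  have m: "act (inv\<^bsub>G\<^esub> a \<otimes>\<^bsub>G\<^esub> c) q = act (inv\<^bsub>G\<^esub> a) (act c q)" if "c \<in> carrier G" for c q
    using iso ia that unfolding isometric_action_def by blast
  have "act (inv\<^bsub>G\<^esub> a \<otimes>\<^bsub>G\<^esub> a) p = p" using grp a iso by (simp add: group.l_inv isometric_action_def)
  then have p: "act (inv\<^bsub>G\<^esub> a) (act a p) = p" using m[OF a] by simp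
  have "dist (act (inv\<^bsub>G\<^esub> a) (act b p)) (act (inv\<^bsub>G\<^esub> a) (act a p)) = dist (act b p) (act a p)"
    using iso ia unfolding isometric_action_def by blast
  then show ?thesis using m[OF b] p by simp
qed

lemma card_A:
  fixes G :: "('g, 'b) monoid_scheme" and act :: "'g \<Rightarrow> 'x::metric_space \<Rightarrow> 'x"
  assumes dpos: "\<delta> > 0" and geo: "geodesic_space TYPE('x)" and hyp: "delta_hyperbolic \<delta> TYPE('x)"
    and grp: "group G" and iso: "isometric_action G act" and acyl: "acylindrical G act \<delta> \<kappa>0 N0"
    and kd: "\<kappa>0 \<ge> \<delta>" and far: "dist x y \<ge> 10^4 * \<kappa>0"
  shows "finite {a \<in> carrier G. dist (act a x) x \<le> 2*\<kappa>0 \<and> dist (act a y) y \<le> 2*\<kappa>0} \<and>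
    real (card {a \<in> carrier G. dist (act a x) x \<le> 2*\<kappa>0 \<and> dist (act a y) y \<le> 2*\<kappa>0}) \<le> 36 * real N0 * \<kappa>0^2 / \<delta>^2"
proof -
  define A where "A = {a \<in> carrier G. dist (act a x) x \<le> 2*\<kappa>0 \<and> dist (act a y) y \<le> 2*\<kappa>0}"
  define L where "L = dist x y"
  obtain \<gamma> where g0: "\<gamma> 0 = x" and gL: "\<gamma> L = y"
    and gi: "\<forall>s\<in>{0..L}. \<forall>t\<in>{0..L}. dist (\<gamma> s) (\<gamma> t) = \<bar>s - t\<bar>"
    using geo unfolding geodesic_space_def L_def by blast
  define K where "K = 2 * \<kappa>0"
  define h where "h z = (dist z x - dist z y + L) / 2" for z
  have isoa: "dist (act a p) (act a q) = dist p q" if "a \<in> carrier G" for a p q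
    using iso that unfolding isometric_action_def by blast
  have key: "dist (act a (\<gamma> s)) (\<gamma> (h (act a (\<gamma> s)))) \<le> 4 * \<delta> \<and> s - K \<le> h (act a (\<gamma> s))
      \<and> h (act a (\<gamma> s)) \<le> s + K"
    if aA: "a \<in> A" and c1: "s - K > \<delta>" and c2: "L - s - K > 2 * \<delta>" for a s
  proof -
    have ac: "a \<in> carrier G" using aA A_def by auto
    have s0: "0 \<le> s" "s \<le> L" using c1 c2 dpos kd K_def by auto
    have L0: "0 \<le> L" using L_def by simp
    have e1: "dist (act a x) (act a y) = dist x y" using isoa ac by simp
    have "dist (\<gamma> 0) (\<gamma> s) = \<bar>0 - s\<bar>" using gi s0 L0 by auto
    then have e2: "dist (act a x) (act a (\<gamma> s)) = s" using isoa ac g0 s0 by simp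
    have "dist (\<gamma> s) (\<gamma> L) = \<bar>s - L\<bar>" using gi s0 L0 by auto
    then have e3: "dist (act a (\<gamma> s)) (act a y) = dist x y - s" using isoa ac gL s0 L_def by simp
    have k1: "dist x (act a x) \<le> K" using aA A_def K_def by (simp add: dist_commute)
    have k2: "dist y (act a y) \<le> K" using aA A_def K_def by (simp add: dist_commute)
    note nl = near_line[OF hyp e1 e2 e3 k1 k2 c1 c2[unfolded L_def]]
    have "dist (act a (\<gamma> s)) (\<gamma> (h (act a (\<gamma> s))))
        \<le> (dist (act a (\<gamma> s)) x + dist (act a (\<gamma> s)) y - dist x y) / 2 + 2 * \<delta>"
      apply (rule near_geod[OF hyp g0 gL[unfolded L_def] gi[unfolded L_def]])
      using nl s0 c1 c2 dpos unfolding h_def L_def by auto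
    then show ?thesis using nl unfolding h_def L_def by (intro conjI; linarith)
  qed
  define s1 where "s1 = L / 2"
  define s2 where "s2 = L / 2 + \<kappa>0"
  define p1 where "p1 = \<gamma> s1"
  define p2 where "p2 = \<gamma> s2"
  have Lk: "L \<ge> 10^4 * \<kappa>0" using far L_def by simp
  have cs1: "s1 - K > \<delta>" "L - s1 - K > 2 * \<delta>" using Lk kd dpos unfolding s1_def K_def by auto
  have cs2: "s2 - K > \<delta>" "L - s2 - K > 2 * \<delta>" using Lk kd dpos unfolding s2_def K_def by auto
  have pp: "dist p1 p2 \<ge> \<kappa>0"
  proof -
    have "dist (\<gamma> s1) (\<gamma> s2) = \<bar>s1 - s2\<bar>" using gi Lk kd dpos unfolding s1_def s2_def by auto
    then show ?thesis unfolding p1_def p2_def s1_def s2_def by simp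
  qed
  define S where "S = {g \<in> carrier G. dist (act g p1) p1 \<le> 100 * \<delta> \<and> dist (act g p2) p2 \<le> 100 * \<delta>}"
  have Sfin: "finite S" and Scard: "card S \<le> N0" and N1: "N0 \<ge> 1"
    using acyl pp unfolding acylindrical_def S_def Let_def by auto
  define \<beta> where "\<beta> a = (\<lfloor>(h (act a p1) - s1) / \<delta>\<rfloor>, \<lfloor>(h (act a p2) - s2) / \<delta>\<rfloor>)" for a
  define R where "R = {\<lfloor>- K / \<delta>\<rfloor>..\<lfloor>K / \<delta>\<rfloor>}"
  have fl: "\<lfloor>(h (act a (\<gamma> s)) - s) / \<delta>\<rfloor> \<in> R"
    if "a \<in> A" "s - K > \<delta>" "L - s - K > 2 * \<delta>" for a s
  proof -
    have "s - K \<le> h (act a (\<gamma> s))" "h (act a (\<gamma> s)) \<le> s + K" using key[OF that] by auto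
    then have "(- K) / \<delta> \<le> (h (act a (\<gamma> s)) - s) / \<delta>" "(h (act a (\<gamma> s)) - s) / \<delta> \<le> K / \<delta>"
      using dpos by (metis divide_right_mono diff_le_eq add.commute less_le minus_diff_eq neg_le_iff_le, 
       metis divide_right_mono diff_le_eq add.commute less_le)
    then show ?thesis unfolding R_def by (auto intro: floor_mono)
  qed
  have bR: "\<beta> a \<in> R \<times> R" if "a \<in> A" for a
    using fl[OF that cs1] fl[OF that cs2] unfolding \<beta>_def p1_def p2_def by auto
  have close: "dist (act a (\<gamma> s)) (act a' (\<gamma> s)) \<le> 9 * \<delta>"
    if "a \<in> A" "a' \<in> A" "s - K > \<delta>" "L - s - K > 2 * \<delta>"
      and fe: "\<lfloor>(h (act a (\<gamma> s)) - s) / \<delta>\<rfloor> = \<lfloor>(h (act a' (\<gamma> s)) - s) / \<delta>\<rfloor>" for a a' s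
  proof -
    define u where "u = (h (act a (\<gamma> s)) - s) / \<delta>"
    define u' where "u' = (h (act a' (\<gamma> s)) - s) / \<delta>"
    have "\<bar>u - u'\<bar> < 1" using fe unfolding u_def[symmetric] u'_def[symmetric]
      by linarith
    then have "\<bar>u - u'\<bar> * \<delta> < \<delta>" using dpos by simp
    moreover have "(u - u') * \<delta> = h (act a (\<gamma> s)) - h (act a' (\<gamma> s))"
      unfolding u_def u'_def using dpos by (simp add: field_simps)
    ultimately have hd: "\<bar>h (act a (\<gamma> s)) - h (act a' (\<gamma> s))\<bar> < \<delta>" using dpos
      by (metis abs_mult abs_of_pos)
    note k1 = key[OF that(1,3,4)] and k2 = key[OF that(2,3,4)]
    have "dist (\<gamma> (h (act a (\<gamma> s)))) (\<gamma> (h (act a' (\<gamma> s)))) = \<bar>h (act a (\<gamma> s)) - h (act a' (\<gamma> s))\<bar>"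
      apply (rule gi[rule_format]) using k1 k2 that(3,4) dpos kd unfolding K_def by auto
    then show ?thesis using k1 k2 hd
      dist_triangle[of "act a (\<gamma> s)" "act a' (\<gamma> s)" "\<gamma> (h (act a (\<gamma> s)))"]
      dist_triangle[of "\<gamma> (h (act a (\<gamma> s)))" "act a' (\<gamma> s)" "\<gamma> (h (act a' (\<gamma> s)))"]
      by (simp add: dist_commute)
  qed
  define F where "F k = {a \<in> A. \<beta> a = k}" for k
  have Fb: "finite (F k) \<and> card (F k) \<le> N0" for k
  proof (cases "F k = {}")
    case True then show ?thesis by simp
  next
    case False
    then obtain a0 where a0: "a0 \<in> F k" by auto
    have a0c: "a0 \<in> carrier G" using a0 unfolding F_def A_def by auto
    have ia: "inv\<^bsub>G\<^esub> a0 \<in> carrier G" using grp a0c by (simp add: group.inv_closed)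
    have inj: "inj_on (\<lambda>a'. inv\<^bsub>G\<^esub> a0 \<otimes>\<^bsub>G\<^esub> a') (F k)"
      unfolding inj_on_def F_def A_def using grp ia by (auto simp: group.Units_eq monoid.Units_l_cancel group.is_monoid)
    have sub: "(\<lambda>a'. inv\<^bsub>G\<^esub> a0 \<otimes>\<^bsub>G\<^esub> a') ` F k \<subseteq> S"
    proof
      fix g assume "g \<in> (\<lambda>a'. inv\<^bsub>G\<^esub> a0 \<otimes>\<^bsub>G\<^esub> a') ` F k"
      then obtain a' where a': "a' \<in> F k" and g: "g = inv\<^bsub>G\<^esub> a0 \<otimes>\<^bsub>G\<^esub> a'" by auto
      have a'c: "a' \<in> carrier G" using a' unfolding F_def A_def by auto
      have eq: "\<beta> a0 = \<beta> a'" using a0 a' unfolding F_def by auto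
      have A2: "a0 \<in> A" "a' \<in> A" using a0 a' unfolding F_def by auto
      have "dist (act a0 (\<gamma> s1)) (act a' (\<gamma> s1)) \<le> 9 * \<delta>"
        apply (rule close[OF A2 cs1]) using eq unfolding \<beta>_def p1_def by simp
      moreover have "dist (act a0 (\<gamma> s2)) (act a' (\<gamma> s2)) \<le> 9 * \<delta>"
        apply (rule close[OF A2 cs2]) using eq unfolding \<beta>_def p2_def by simp
      ultimately show "g \<in> S" unfolding S_def g
        using act_inv_dist[OF grp iso a0c a'c] grp ia a'c dpos
        by (auto simp: monoid.m_closed group.is_monoid dist_commute p1_def p2_def)
    qed
    have fin: "finite (F k)" using inj sub Sfin by (meson finite_imageD finite_subset)
    have "card (F k) \<le> card S" using card_inj_on_le[OF inj sub Sfin] .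
    then show ?thesis using fin Scard by simp
  qed
  have AU: "A = (\<Union>k\<in>R \<times> R. F k)" unfolding F_def using bR by auto
  have Rfin: "finite (R \<times> R)" unfolding R_def by simp
  have finA: "finite A" unfolding AU using Rfin Fb by auto
  have "card A \<le> (\<Sum>k\<in>R \<times> R. card (F k))" unfolding AU using card_UN_le[OF Rfin] by blast
  also have "\<dots> \<le> card (R \<times> R) * N0" using sum_bounded_above[of "R \<times> R" "\<lambda>k. card (F k)" N0] Fb by auto
  finally have cA: "real (card A) \<le> real (card R) ^ 2 * real N0"
    by (simp add: card_cartesian_product power2_eq_square of_nat_mult[symmetric] del: of_nat_mult)
  have "real (card R) = real_of_int (\<lfloor>K / \<delta>\<rfloor> - \<lfloor>- K / \<delta>\<rfloor> + 1)"
    unfolding R_def using floor_mono[of "- K / \<delta>" "K / \<delta>"] kd dpos K_def by auto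
  also have "\<dots> \<le> 2 * (K / \<delta>) + 2" by linarith
  also have "\<dots> \<le> 6 * (\<kappa>0 / \<delta>)" using kd dpos unfolding K_def by (simp add: field_simps)
  finally have cR: "real (card R) \<le> 6 * (\<kappa>0 / \<delta>)" .
  have "real (card R) ^ 2 \<le> (6 * (\<kappa>0 / \<delta>)) ^ 2" using cR by (intro power_mono) auto
  then have "real (card R) ^ 2 * real N0 \<le> (6 * (\<kappa>0 / \<delta>)) ^ 2 * real N0" by (intro mult_right_mono) auto
  also have "\<dots> = 36 * real N0 * \<kappa>0^2 / \<delta>^2" by (simp add: power_divide power_mult_distrib)
  finally show ?thesis using cA finA unfolding A_def by simp
qed
theorem lemma5p1:
  fixes G :: "('g, 'b) monoid_scheme" and act :: "'g \<Rightarrow> 'x::metric_space \<Rightarrow> 'x"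
    and \<delta> \<kappa>0 :: real and N0 :: nat and U :: "'g set" and x0 :: 'x and v :: 'g
  assumes "\<delta> > 0"
    and "geodesic_space TYPE('x)"
    and "delta_hyperbolic \<delta> TYPE('x)"
    and "group G"
    and "isometric_action G act"
    and "acylindrical G act \<delta> \<kappa>0 N0"
    and "\<kappa>0 \<ge> \<delta>"
    and "U \<subseteq> carrier G" and "finite U"
    and "mean_disp act U x0 \<le> energy act U + \<delta>"
    and "v \<in> carrier G"
    and "dist (act v x0) x0 \<ge> 10^4 * \<kappa>0"
  shows "let \<rho>0 = \<delta> / real N0; c = (1 / 10^6) * (\<rho>0 / \<kappa>0);
             U1 = {u \<in> U. dist (act u x0) x0 \<le> \<kappa>0}
         in real (card (double_coset_prod G U1 v)) \<ge> c^2 * real (card U1)^2"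
proof -
  define U1 where "U1 = {u \<in> U. dist (act u x0) x0 \<le> \<kappa>0}"
  define D where "D = double_coset_prod G U1 v"
  define y where "y = act v x0"
  define A where "A = {a \<in> carrier G. dist (act a x0) x0 \<le> 2*\<kappa>0 \<and> dist (act a y) y \<le> 2*\<kappa>0}"
  have grp: "group G" and iso: "isometric_action G act" using assms by auto
  have far: "dist x0 y \<ge> 10^4 * \<kappa>0" using assms(12) unfolding y_def by (simp add: dist_commute)
  have cA: "finite A \<and> real (card A) \<le> 36 * real N0 * \<kappa>0^2 / \<delta>^2"
    unfolding A_def using card_A[OF assms(1,2,3,4,5,6,7) far] .
  have U1c: "U1 \<subseteq> carrier G" using assms(8) unfolding U1_def by auto
  have U1f: "finite U1" using assms(9) unfolding U1_def by auto
  have vc: "v \<in> carrier G" using assms(11) .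
  have mc: "a \<otimes>\<^bsub>G\<^esub> b \<in> carrier G" if "a \<in> carrier G" "b \<in> carrier G" for a b
    using grp that by (simp add: monoid.m_closed group.is_monoid)
  have ic: "inv\<^bsub>G\<^esub> a \<in> carrier G" if "a \<in> carrier G" for a
    using grp that by (simp add: group.inv_closed)
  have lc: "b = c" if "a \<in> carrier G" "b \<in> carrier G" "c \<in> carrier G" "a \<otimes>\<^bsub>G\<^esub> b = a \<otimes>\<^bsub>G\<^esub> c" for a b c
    using grp that by (simp add: group.Units_eq monoid.Units_l_cancel group.is_monoid)
  have actm: "act (a \<otimes>\<^bsub>G\<^esub> b) p = act a (act b p)" if "a \<in> carrier G" "b \<in> carrier G" for a b p
    using iso that unfolding isometric_action_def by blast
  have isoa: "dist (act a p) (act a q) = dist p q" if "a \<in> carrier G" for a p q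
    using iso that unfolding isometric_action_def by blast
  have Dimg: "D = (\<lambda>(u, w). u \<otimes>\<^bsub>G\<^esub> v \<otimes>\<^bsub>G\<^esub> w) ` (U1 \<times> U1)"
    unfolding D_def double_coset_prod_def by auto
  have Df: "finite D" unfolding Dimg using U1f by simp
  define rep where "rep g = (SOME p. p \<in> U1 \<times> U1 \<and> g = fst p \<otimes>\<^bsub>G\<^esub> v \<otimes>\<^bsub>G\<^esub> snd p)" for g
  have repP: "rep (u \<otimes>\<^bsub>G\<^esub> v \<otimes>\<^bsub>G\<^esub> w) \<in> U1 \<times> U1 \<and>
      u \<otimes>\<^bsub>G\<^esub> v \<otimes>\<^bsub>G\<^esub> w = fst (rep (u \<otimes>\<^bsub>G\<^esub> v \<otimes>\<^bsub>G\<^esub> w)) \<otimes>\<^bsub>G\<^esub> v \<otimes>\<^bsub>G\<^esub> snd (rep (u \<otimes>\<^bsub>G\<^esub> v \<otimes>\<^bsub>G\<^esub> w))"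
    if "u \<in> U1" "w \<in> U1" for u w
    unfolding rep_def by (rule someI[of _ "(u, w)"]) (use that in auto)
  define f where "f p = (fst p \<otimes>\<^bsub>G\<^esub> v \<otimes>\<^bsub>G\<^esub> snd p,
      inv\<^bsub>G\<^esub> (fst (rep (fst p \<otimes>\<^bsub>G\<^esub> v \<otimes>\<^bsub>G\<^esub> snd p))) \<otimes>\<^bsub>G\<^esub> fst p)" for p
  have inj: "inj_on f (U1 \<times> U1)"
  proof (rule inj_onI)
    fix p q assume p: "p \<in> U1 \<times> U1" and q: "q \<in> U1 \<times> U1" and e: "f p = f q"
    obtain u w where pu: "p = (u, w)" by force
    obtain u' w' where qu: "q = (u', w')" by force
    have c: "u \<in> carrier G" "w \<in> carrier G" "u' \<in> carrier G" "w' \<in> carrier G"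
      using p q U1c pu qu by auto
    have g: "u \<otimes>\<^bsub>G\<^esub> v \<otimes>\<^bsub>G\<^esub> w = u' \<otimes>\<^bsub>G\<^esub> v \<otimes>\<^bsub>G\<^esub> w'" using e pu qu unfolding f_def by simp
    have r: "fst (rep (u \<otimes>\<^bsub>G\<^esub> v \<otimes>\<^bsub>G\<^esub> w)) \<in> carrier G" using repP[of u w] p pu U1c by auto
    have "inv\<^bsub>G\<^esub> (fst (rep (u \<otimes>\<^bsub>G\<^esub> v \<otimes>\<^bsub>G\<^esub> w))) \<otimes>\<^bsub>G\<^esub> u
        = inv\<^bsub>G\<^esub> (fst (rep (u \<otimes>\<^bsub>G\<^esub> v \<otimes>\<^bsub>G\<^esub> w))) \<otimes>\<^bsub>G\<^esub> u'"
      using e g pu qu unfolding f_def by simp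
    then have uu: "u = u'" using lc[OF ic[OF r] c(1,3)] by simp
    then have "w = w'" using lc[OF mc[OF c(1) vc] c(2,4)] g by simp
    then show "p = q" using uu pu qu by simp
  qed
  have sub: "f ` (U1 \<times> U1) \<subseteq> D \<times> A"
  proof
    fix z assume "z \<in> f ` (U1 \<times> U1)"
    then obtain u w where uw: "u \<in> U1" "w \<in> U1" and z: "z = f (u, w)" by auto
    define g where "g = u \<otimes>\<^bsub>G\<^esub> v \<otimes>\<^bsub>G\<^esub> w"
    obtain u0 w0 where r: "rep g = (u0, w0)" by force
    have r0: "u0 \<in> U1" "w0 \<in> U1" "g = u0 \<otimes>\<^bsub>G\<^esub> v \<otimes>\<^bsub>G\<^esub> w0" using repP[OF uw] r unfolding g_def by auto
    have c: "u \<in> carrier G" "w \<in> carrier G" "u0 \<in> carrier G" "w0 \<in> carrier G"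
      using uw r0 U1c by auto
    have gD: "g \<in> D" unfolding Dimg g_def using uw by auto
    define a where "a = inv\<^bsub>G\<^esub> u0 \<otimes>\<^bsub>G\<^esub> u"
    have zz: "z = (g, a)" unfolding z f_def a_def g_def using r unfolding g_def by simp
    have ac: "a \<in> carrier G" unfolding a_def using mc ic c by auto
    have d1: "dist (act a x0) x0 = dist (act u x0) (act u0 x0)"
      unfolding a_def using act_inv_dist[OF grp iso c(3,1)] .
    have b1: "dist (act u x0) x0 \<le> \<kappa>0" "dist (act u0 x0) x0 \<le> \<kappa>0" "dist (act w x0) x0 \<le> \<kappa>0" "dist (act w0 x0) x0 \<le> \<kappa>0"
      using uw r0 unfolding U1_def by auto
    have "dist (act u x0) (act u0 x0) \<le> dist (act u x0) x0 + dist (act u0 x0) x0"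
      by (metis dist_commute dist_triangle)
    then have A1: "dist (act a x0) x0 \<le> 2 * \<kappa>0" using d1 b1 by simp
    have d2: "dist (act a y) y = dist (act u y) (act u0 y)"
      unfolding a_def using act_inv_dist[OF grp iso c(3,1)] .
    have uv: "u \<otimes>\<^bsub>G\<^esub> v \<in> carrier G" "u0 \<otimes>\<^bsub>G\<^esub> v \<in> carrier G" using mc c vc by auto
    have e1: "act u y = act (u \<otimes>\<^bsub>G\<^esub> v) x0" unfolding y_def using actm c vc by simp
    have e2: "act u0 y = act (u0 \<otimes>\<^bsub>G\<^esub> v) x0" unfolding y_def using actm c vc by simp
    have e3: "act g x0 = act (u \<otimes>\<^bsub>G\<^esub> v) (act w x0)" unfolding g_def using actm uv c by simp
    have e4: "act g x0 = act (u0 \<otimes>\<^bsub>G\<^esub> v) (act w0 x0)" unfolding r0(3) using actm uv c by simp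
    have f1: "dist (act (u \<otimes>\<^bsub>G\<^esub> v) x0) (act g x0) \<le> \<kappa>0"
      using e3 isoa[OF uv(1)] b1 by (simp add: dist_commute)
    have f2: "dist (act (u0 \<otimes>\<^bsub>G\<^esub> v) x0) (act g x0) \<le> \<kappa>0"
      using e4 isoa[OF uv(2)] b1 by (simp add: dist_commute)
    have "dist (act u y) (act u0 y) \<le> dist (act u y) (act g x0) + dist (act u0 y) (act g x0)"
      by (metis dist_commute dist_triangle)
    then have A2: "dist (act a y) y \<le> 2 * \<kappa>0" using d2 e1 e2 f1 f2 by simp
    show "z \<in> D \<times> A" using zz gD ac A1 A2 unfolding A_def by simp
  qed
  have "card (U1 \<times> U1) \<le> card (D \<times> A)"
    using card_inj_on_le[OF inj sub] Df cA by simp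
  then have "card U1 * card U1 \<le> card D * card A" by (simp add: card_cartesian_product)
  then have cU: "real (card U1) ^ 2 \<le> real (card D) * real (card A)"
    by (simp add: power2_eq_square of_nat_mult[symmetric] del: of_nat_mult)
  define c where "c = (1 / 10^6) * ((\<delta> / real N0) / \<kappa>0)"
  have N1: "N0 \<ge> 1" using assms(6) unfolding acylindrical_def by simp
  have kpos: "\<kappa>0 > 0" using assms(1,7) by simp
  have cc: "c^2 * (36 * real N0 * \<kappa>0^2 / \<delta>^2) \<le> 1"
  proof -
    have "c^2 * (36 * real N0 * \<kappa>0^2 / \<delta>^2) = 36 / (10^12 * real N0)"
      unfolding c_def using N1 kpos assms(1) by (simp add: field_simps power2_eq_square)
    also have "\<dots> \<le> 1" using N1 by (simp add: field_simps)
    finally show ?thesis .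
  qed
  have "c^2 * real (card U1) ^ 2 \<le> c^2 * (real (card D) * real (card A))"
    using cU by (intro mult_left_mono) auto
  also have "\<dots> \<le> c^2 * (real (card D) * (36 * real N0 * \<kappa>0^2 / \<delta>^2))"
    using cA by (intro mult_left_mono) auto
  also have "\<dots> = real (card D) * (c^2 * (36 * real N0 * \<kappa>0^2 / \<delta>^2))" by simp
  also have "\<dots> \<le> real (card D) * 1" using cc by (intro mult_left_mono) auto
  finally show ?thesis unfolding Let_def c_def[symmetric] U1_def[symmetric] D_def[symmetric] by simp
qed
end
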